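(* Let $n \ge 1$ and let $x_1, \dots, x_n$ be real numbers satisfying $$x_1 > -x_2 > x_3 > \cdots > (-1)^{n+1} x_n > 0,$$ i.e. $(-1)^{i+1}x_i > (-1)^{i+2}x_{i+1}$ for $1 \le i \le n-1$ and $(-1)^{n+1}x_n > 0$. For $1 \le r \le n$ let $$s_r = \sum_{1 \le i_1 < i_2 < \cdots < i_r \le n} x_{i_1} x_{i_2} \cdots x_{i_r}$$ be the $r$-th elementary symmetric polynomial in $x_1,\dots,x_n$. Then for every integer $d \ge 0$ (and whenever the index lies in $\{1,\dots,n\}$): $$s_{4d+1} > 0,\quad s_{4d+2} < 0,\quad s_{4d+3} < 0,\quad s_{4d+4} > 0.$$ *)

theory Defs
  imports Complex_Main
begin

definition elem_sym :: "nat \<Rightarrow> (nat \<Rightarrow> real) \<Rightarrow> nat \<Rightarrow> real" where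
  "elem_sym n x r = (\<Sum>S \<in> {S. S \<subseteq> {1..n} \<and> card S = r}. \<Prod>i\<in>S. x i)"

end

theory Submission
  imports Defs
begin

lemma es_zero: "elem_sym m x 0 = 1"
proof -
  have "{S. S \<subseteq> {1..m} \<and> card S = 0} = {{}}"
    by (auto dest: finite_subset)
  thus ?thesis by (simp add: elem_sym_def)
qed

lemma es_big: "m < r \<Longrightarrow> elem_sym m x r = 0"
proof -
  assume a: "m < r"
  have e: "{S. S \<subseteq> {1..m} \<and> card S = r} = {}"
  proof (rule ccontr)
    assume "{S. S \<subseteq> {1..m} \<and> card S = r} \<noteq> {}"
    then obtain S where "S \<subseteq> {1..m}" "card S = r" by auto
    hence "r \<le> m" using card_mono[of "{1..m}" S] by auto
    thus False using a by simp
  qed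
  show ?thesis unfolding elem_sym_def e by simp
qed

lemma es_rec: "elem_sym (Suc m) x (Suc r) = elem_sym m x (Suc r) + x (Suc m) * elem_sym m x r"
proof -
  define A where "A = {S. S \<subseteq> {1..m} \<and> card S = Suc r}"
  define B where "B = {S. S \<subseteq> {1..m} \<and> card S = r}"
  have eq: "{S. S \<subseteq> {1..Suc m} \<and> card S = Suc r} = A \<union> insert (Suc m) ` B"
  proof (intro equalityI subsetI)
    fix S assume "S \<in> {S. S \<subseteq> {1..Suc m} \<and> card S = Suc r}"
    hence S: "S \<subseteq> {1..Suc m}" "card S = Suc r" by auto
    have fS: "finite S" using S(1) finite_subset by blast
    show "S \<in> A \<union> insert (Suc m) ` B"
    proof (cases "Suc m \<in> S")
      case True
      have "S - {Suc m} \<in> B" unfolding B_def using S fS True by auto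
      moreover have "S = insert (Suc m) (S - {Suc m})" using True by auto
      ultimately show ?thesis by blast
    next
      case False
      have "S \<subseteq> {1..m}" using S(1) False by (auto simp: le_Suc_eq)
      thus ?thesis unfolding A_def using S by auto
    qed
  next
    fix S assume "S \<in> A \<union> insert (Suc m) ` B"
    thus "S \<in> {S. S \<subseteq> {1..Suc m} \<and> card S = Suc r}"
    proof
      assume "S \<in> A" thus ?thesis unfolding A_def by auto
    next
      assume "S \<in> insert (Suc m) ` B"
      then obtain T where T: "T \<subseteq> {1..m}" "card T = r" "S = insert (Suc m) T"
        unfolding B_def by auto
      have "finite T" using T(1) finite_subset by blast
      moreover have "Suc m \<notin> T" using T(1) by auto
      ultimately show ?thesis using T by auto
    qed
  qed
  have fA: "finite A" unfolding A_def by (rule finite_subset[of _ "Pow {1..m}"]) auto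
  have fB: "finite B" unfolding B_def by (rule finite_subset[of _ "Pow {1..m}"]) auto
  have disj: "A \<inter> insert (Suc m) ` B = {}" unfolding A_def by auto
  have inj: "inj_on (insert (Suc m)) B"
  proof (rule inj_onI)
    fix S T assume "S \<in> B" "T \<in> B" "insert (Suc m) S = insert (Suc m) T"
    moreover have "Suc m \<notin> S" "Suc m \<notin> T" using \<open>S \<in> B\<close> \<open>T \<in> B\<close> unfolding B_def by auto
    ultimately show "S = T" using insert_ident by metis
  qed
  have "elem_sym (Suc m) x (Suc r) = (\<Sum>S\<in>A. \<Prod>i\<in>S. x i) + (\<Sum>S\<in>insert (Suc m) ` B. \<Prod>i\<in>S. x i)"
    unfolding elem_sym_def eq using fA fB disj by (simp add: sum.union_disjoint)
  also have "(\<Sum>S\<in>insert (Suc m) ` B. \<Prod>i\<in>S. x i) = (\<Sum>T\<in>B. \<Prod>i\<in>insert (Suc m) T. x i)"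
    using inj by (simp add: sum.reindex)
  also have "\<dots> = (\<Sum>T\<in>B. x (Suc m) * (\<Prod>i\<in>T. x i))"
  proof (rule sum.cong)
    fix T assume "T \<in> B"
    hence "finite T" "Suc m \<notin> T" unfolding B_def using finite_subset by auto
    thus "(\<Prod>i\<in>insert (Suc m) T. x i) = x (Suc m) * (\<Prod>i\<in>T. x i)" by simp
  qed simp
  also have "\<dots> = x (Suc m) * elem_sym m x r"
    unfolding elem_sym_def B_def by (simp add: sum_distrib_left)
  finally show ?thesis unfolding A_def elem_sym_def by simp
qed

fun sg :: "nat \<Rightarrow> real" where
  "sg 0 = 1"
| "sg (Suc r) = (-1)^r * sg r"

lemma sg4: "sg (r + 4) = sg r"
proof -
  have "sg (r+4) = (-1)^(r+3) * (-1)^(r+2) * (-1)^(r+1) * (-1)^r * sg r"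
    by (simp add: numeral_eq_Suc)
  also have "\<dots> = (-1)^(4*r+6) * sg r" by (simp add: power_add[symmetric] algebra_simps)
  also have "\<dots> = sg r" by (simp add: power_add power_mult)
  finally show ?thesis .
qed

lemma sgd: "sg (4*d+1) = 1 \<and> sg (4*d+2) = -1 \<and> sg (4*d+3) = -1 \<and> sg (4*d+4) = 1"
proof (induction d)
  case 0 then show ?case by (simp add: numeral_eq_Suc)
next
  case (Suc d)
  have "4 * Suc d + 1 = (4*d+1)+4" "4 * Suc d + 2 = (4*d+2)+4"
       "4 * Suc d + 3 = (4*d+3)+4" "4 * Suc d + 4 = (4*d+4)+4" by simp_all
  then show ?case using Suc by (simp only: sg4)
qed

lemma Grec:
  fixes y :: "nat \<Rightarrow> real"
  assumes "\<And>i. y i = (-1)^(i+1) * x i"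
  shows "sg (Suc r) * elem_sym (Suc m) x (Suc r) =
     sg (Suc r) * elem_sym m x (Suc r) + (-1)^(m+r) * y (Suc m) * (sg r * elem_sym m x r)"
proof -
  have xe: "x (Suc m) = (-1)^(m+2) * y (Suc m)"
    using assms[of "Suc m"] by (simp add: power_add)
  have "(-1::real)^r * (-1)^(m+2) = (-1)^(m+r)" by (simp add: power_add)
  then show ?thesis unfolding es_rec xe by (simp add: algebra_simps)
qed


declare sg.simps(2)[simp del]

lemma mainpos:
  fixes y x :: "nat \<Rightarrow> real" and n :: nat
  assumes ydef: "\<And>i. y i = (-1)^(i+1) * x i"
    and dec: "\<And>i. 1 \<le> i \<Longrightarrow> i < n \<Longrightarrow> y (i+1) < y i"
    and pos: "\<And>i. 1 \<le> i \<Longrightarrow> i \<le> n \<Longrightarrow> y i > 0"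
  shows "m \<le> n \<Longrightarrow> r \<le> m \<Longrightarrow> sg r * elem_sym m x r > 0"
proof (induction m arbitrary: r rule: less_induct)
  case (less m)
  have ge: "\<And>k r. k < m \<Longrightarrow> sg r * elem_sym k x r \<ge> 0"
  proof -
    fix k r assume k: "k < m"
    show "sg r * elem_sym k x r \<ge> 0"
    proof (cases "r \<le> k")
      case True thus ?thesis using less.IH[OF k, of r] less.prems k by simp
    next
      case False thus ?thesis by (simp add: es_big)
    qed
  qed
  show ?case
  proof (cases r)
    case 0 thus ?thesis by (simp add: es_zero)
  next
    case (Suc r')
    then obtain m' where m': "m = Suc m'" using less.prems by (cases m) auto
    have rm: "r' \<le> m'" using less.prems Suc m' by simp
    have rec1: "sg (Suc r') * elem_sym (Suc m') x (Suc r') =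
       sg (Suc r') * elem_sym m' x (Suc r') + (-1)^(m'+r') * y (Suc m') * (sg r' * elem_sym m' x r')"
      by (rule Grec[OF ydef])
    have ySm: "y (Suc m') > 0" using pos[of "Suc m'"] less.prems m' by simp
    show ?thesis
    proof (cases "even (m'+r')")
      case True
      have "sg r' * elem_sym m' x r' > 0" using less.IH[of m' r'] m' less.prems rm by simp
      moreover have "sg (Suc r') * elem_sym m' x (Suc r') \<ge> 0" using ge[of m'] m' by simp
      ultimately show ?thesis using rec1 True ySm Suc m'
        by (simp add: add_nonneg_pos)
    next
      case False
      then obtain m'' where m'': "m' = Suc m''" using rm by (cases m') auto
      have rm2: "r' \<le> m''" using False rm m'' by (cases "r' = m'") auto
      have ym: "y (Suc m'') > 0" using pos[of "Suc m''"] less.prems m' m'' by simp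
      have yd: "y (Suc m') < y (Suc m'')" using dec[of "Suc m''"] less.prems m' m'' by simp
      have ev: "even (m''+r')" using False m'' by simp
      have s1: "(-1::real)^(m'+r') = -1" using False by simp
      have s2: "(-1::real)^(m''+r') = 1" using ev by simp
      have rec2: "sg (Suc r') * elem_sym (Suc m'') x (Suc r') =
       sg (Suc r') * elem_sym m'' x (Suc r') + (-1)^(m''+r') * y (Suc m'') * (sg r' * elem_sym m'' x r')"
        by (rule Grec[OF ydef])
      have g1: "sg (Suc r') * elem_sym m'' x (Suc r') \<ge> 0" using ge[of m''] m' m'' by simp
      have g2: "sg r' * elem_sym m'' x r' > 0" using less.IH[of m'' r'] m' m'' less.prems rm2 by simp
      show ?thesis
      proof (cases r')
        case 0
        have e0: "sg (Suc r') * elem_sym m x (Suc r') =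
          sg (Suc r') * elem_sym m'' x (Suc r') + y (Suc m'') * (sg r' * elem_sym m'' x r')
           - y (Suc m') * (sg r' * elem_sym m' x r')"
          using rec1 rec2 s1 s2 m' m'' by simp
        have "sg r' * elem_sym m' x r' = 1" "sg r' * elem_sym m'' x r' = 1"
          using 0 by (simp_all add: es_zero)
        with e0 have "sg (Suc r') * elem_sym m x (Suc r') =
          sg (Suc r') * elem_sym m'' x (Suc r') + (y (Suc m'') - y (Suc m'))"
          by simp
        thus ?thesis using g1 yd Suc by simp
      next
        case (Suc r'')
        have rec3: "sg (Suc r'') * elem_sym (Suc m'') x (Suc r'') =
         sg (Suc r'') * elem_sym m'' x (Suc r'') + (-1)^(m''+r'') * y (Suc m'') * (sg r'' * elem_sym m'' x r'')"
          by (rule Grec[OF ydef])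
        have s3: "(-1::real)^(m''+r'') = -1" using ev Suc by simp
        have g3: "sg r'' * elem_sym m'' x r'' > 0" using less.IH[of m'' r''] m' m'' less.prems rm2 Suc by simp
        define A where "A = sg (Suc r') * elem_sym m'' x (Suc r')"
        define B where "B = sg r' * elem_sym m'' x r'"
        define C where "C = sg r'' * elem_sym m'' x r''"
        have "sg r * elem_sym m x r = A + y (Suc m'') * B - y (Suc m') * (B - y (Suc m'') * C)"
          using rec1 rec2 rec3 s1 s2 s3 m' m'' \<open>r = Suc r'\<close> Suc unfolding A_def B_def C_def by simp
        also have "\<dots> = A + (y (Suc m'') - y (Suc m')) * B + y (Suc m') * y (Suc m'') * C"
          by (simp add: algebra_simps)
        finally have eq: "sg r * elem_sym m x r = A + (y (Suc m'') - y (Suc m')) * B + y (Suc m') * y (Suc m'') * C" .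
        have "A \<ge> 0" using g1 A_def by simp
        moreover have "(y (Suc m'') - y (Suc m')) * B \<ge> 0" using yd g2 B_def by simp
        moreover have "y (Suc m') * y (Suc m'') * C > 0" using ySm ym g3 C_def by simp
        ultimately show ?thesis using eq by linarith
      qed
    qed
  qed
qed

theorem theorem1:
  fixes n :: nat and x :: "nat \<Rightarrow> real"
  assumes "n \<ge> 1"
    and "\<And>i. 1 \<le> i \<Longrightarrow> i \<le> n - 1 \<Longrightarrow>
           (-1) ^ (i + 1) * x i > (-1) ^ (i + 2) * x (i + 1)"
    and "(-1) ^ (n + 1) * x n > 0"
  shows "\<forall>d::nat.
           (4*d+1 \<le> n \<longrightarrow> elem_sym n x (4*d+1) > 0) \<and>
           (4*d+2 \<le> n \<longrightarrow> elem_sym n x (4*d+2) < 0) \<and>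
           (4*d+3 \<le> n \<longrightarrow> elem_sym n x (4*d+3) < 0) \<and>
           (4*d+4 \<le> n \<longrightarrow> elem_sym n x (4*d+4) > 0)"
proof -
  define y where "y i = (-1::real)^(i+1) * x i" for i
  have dec: "\<And>i. 1 \<le> i \<Longrightarrow> i < n \<Longrightarrow> y (i+1) < y i"
    using assms(2) unfolding y_def by simp
  have pos: "\<And>i. 1 \<le> i \<Longrightarrow> i \<le> n \<Longrightarrow> y i > 0"
  proof -
    fix i assume i: "1 \<le> i" "i \<le> n"
    show "y i > 0" using i
    proof (induction "n - i" arbitrary: i)
      case 0 then have "i = n" by simp
      thus ?case using assms(3) unfolding y_def by simp
    next
      case (Suc k)
      have "y (i+1) > 0" using Suc by simp
      moreover have "y (i+1) < y i" using dec[of i] Suc.prems Suc.hyps by simp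
      ultimately show ?case by simp
    qed
  qed
  have P: "\<And>r. r \<le> n \<Longrightarrow> sg r * elem_sym n x r > 0"
    using mainpos[OF y_def dec pos] by simp
  show ?thesis
  proof (intro allI conjI impI)
    fix d
    show "4*d+1 \<le> n \<Longrightarrow> elem_sym n x (4*d+1) > 0" using P[of "4*d+1"] sgd[of d] by simp
    show "4*d+2 \<le> n \<Longrightarrow> elem_sym n x (4*d+2) < 0" using P[of "4*d+2"] sgd[of d] by simp
    show "4*d+3 \<le> n \<Longrightarrow> elem_sym n x (4*d+3) < 0" using P[of "4*d+3"] sgd[of d] by simp
    show "4*d+4 \<le> n \<Longrightarrow> elem_sym n x (4*d+4) > 0" using P[of "4*d+4"] sgd[of d] by simp
  qed
qed

end
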